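(* For each $q\ge 1$ there exists a constant $C_q>0$ such that for every $n>0$ there exists a Boolean function $f:\{0,1\}^n\to\{0,1\}$ whose stringent $q$-ary quantum circuit complexity is at least $C_q\cdot 2^n/n$.
   Context: $V$ is a 2-dimensional complex Hermitian space with orthonormal basis $|0\rangle,|1\rangle$. For $f:\{0,1\}^n\to\{0,1\}$, $U_f\in\mathbf{U}(V^{\otimes(n+1)})$ is defined by $U_f(|\mathbf{x}\rangle\otimes|y\rangle) = |\mathbf{x}\rangle\otimes|f(x)\oplus y\rangle$. A $q$-ary quantum gate is an element $U_g\in\mathbf{U}(V^{\otimes q})$; applied to an ordered choice $\mathbf{i}=(i_1<\cdots<i_q)$ of $q$ of the $m$ tensor factors it gives $U_{g,\mathbf{i}}\in\mathbf{U}(V^{\otimes m})$, namely $U_g$ acting on factors $i_1,\ldots,i_q$ tensored with the identity on the others. The $q$-ary quantum circuit complexity of $U\in\mathbf{U}(V^{\otimes m})$ is the minimum $r$ such that $U = U_{g_1,\mathbf{i}_1}\cdots U_{g_r,\mathbf{i}_r}$ for some $q$-ary gates and index choices. The stringent $q$-ary quantum circuit complexity of $f$ is the $q$-ary quantum circuit complexity of $U_f$ (with $m=n+1$). *)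

theory Defs
  imports Complex_Main "HOL-Library.Extended_Real"
begin

text \<open>Operators on V^{tensor m}: V has orthonormal basis |0>,|1> (False, True);
  the computational basis of V^{tensor m} is indexed by bit lists of length m
  (list position k = tensor factor k+1). An operator is given by its matrix
  M row col = <row| M |col>; only entries at lists of length m matter.\<close>

type_synonym qop = "bool list \<Rightarrow> bool list \<Rightarrow> complex"

definition bits :: "nat \<Rightarrow> bool list set" where
  "bits m = {xs. length xs = m}"

definition opeq :: "nat \<Rightarrow> qop \<Rightarrow> qop \<Rightarrow> bool" where
  "opeq m A B \<longleftrightarrow> (\<forall>x\<in>bits m. \<forall>y\<in>bits m. A x y = B x y)"

definition mmul :: "nat \<Rightarrow> qop \<Rightarrow> qop \<Rightarrow> qop" where
  "mmul m A B = (\<lambda>x y. \<Sum>z\<in>bits m. A x z * B z y)"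

definition idop :: qop where
  "idop = (\<lambda>x y. if x = y then 1 else 0)"

definition adjoint :: "qop \<Rightarrow> qop" where
  "adjoint A = (\<lambda>x y. cnj (A y x))"

definition unitary_op :: "nat \<Rightarrow> qop \<Rightarrow> bool" where
  "unitary_op m A \<longleftrightarrow> opeq m (mmul m A (adjoint A)) idop \<and> opeq m (mmul m (adjoint A) A) idop"

definition index_choice :: "nat \<Rightarrow> nat \<Rightarrow> nat list \<Rightarrow> bool" where
  "index_choice q m is \<longleftrightarrow> length is = q \<and> sorted_wrt (<) is \<and> (\<forall>i\<in>set is. i < m)"

text \<open>U_{g,i}: the gate g acting on factors i_1,...,i_q (gate factor j on factor i_j),
  tensored with the identity on the other factors.\<close>
definition apply_gate :: "nat \<Rightarrow> qop \<Rightarrow> nat list \<Rightarrow> qop" where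
  "apply_gate m g is = (\<lambda>x y.
     if (\<forall>k<m. k \<notin> set is \<longrightarrow> x ! k = y ! k)
     then g (map (\<lambda>i. x ! i) is) (map (\<lambda>i. y ! i) is) else 0)"

fun circuit_op :: "nat \<Rightarrow> (qop \<times> nat list) list \<Rightarrow> qop" where
  "circuit_op m [] = idop"
| "circuit_op m ((g, is) # gs) = mmul m (apply_gate m g is) (circuit_op m gs)"

definition q_circuit :: "nat \<Rightarrow> nat \<Rightarrow> (qop \<times> nat list) list \<Rightarrow> bool" where
  "q_circuit q m gs \<longleftrightarrow> (\<forall>(g, is)\<in>set gs. unitary_op q g \<and> index_choice q m is)"

text \<open>q-ary quantum circuit complexity of U in U(V^{tensor m}); infinity if U is not
  expressible as such a product.\<close>
definition qcc :: "nat \<Rightarrow> nat \<Rightarrow> qop \<Rightarrow> enat" where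
  "qcc q m U = (INF gs \<in> {gs. q_circuit q m gs \<and> opeq m (circuit_op m gs) U}. enat (length gs))"

text \<open>U_f(|x> tensor |y>) = |x> tensor |f(x) xor y>, on V^{tensor (n+1)}.\<close>
definition U_f :: "nat \<Rightarrow> (bool list \<Rightarrow> bool) \<Rightarrow> qop" where
  "U_f n f = (\<lambda>r c. if take n r = take n c \<and> r ! n = (f (take n c) \<noteq> c ! n) then 1 else 0)"

definition stringent_qcc :: "nat \<Rightarrow> nat \<Rightarrow> (bool list \<Rightarrow> bool) \<Rightarrow> enat" where
  "stringent_qcc q n f = qcc q (n + 1) (U_f n f)"

end

theory Submission
  imports Defs "HOL-Analysis.L2_Norm" "HOL-Library.FuncSet"
begin


lemma bits_eq: "bits m = {xs. set xs \<subseteq> (UNIV::bool set) \<and> length xs = m}"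
  by (auto simp: bits_def)
lemma finite_bits[simp]: "finite (bits m)"
  unfolding bits_eq by (rule finite_lists_length_eq) simp
lemma card_bits: "card (bits m) = 2 ^ m"
  unfolding bits_eq by (subst card_lists_length_eq) auto

lemma opeq_refl: "opeq m A A" by (simp add: opeq_def)
lemma opeq_sym: "opeq m A B \<Longrightarrow> opeq m B A" by (simp add: opeq_def)
lemma opeq_trans: "opeq m A B \<Longrightarrow> opeq m B C \<Longrightarrow> opeq m A C" by (simp add: opeq_def)

lemma mmul_assoc: "mmul m (mmul m A B) C = mmul m A (mmul m B C)"
proof (intro ext)
  fix x y
  have "mmul m (mmul m A B) C x y = (\<Sum>z\<in>bits m. \<Sum>w\<in>bits m. A x w * B w z * C z y)"
    by (simp add: mmul_def sum_distrib_right)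
  also have "\<dots> = (\<Sum>w\<in>bits m. \<Sum>z\<in>bits m. A x w * B w z * C z y)"
    by (rule sum.swap)
  also have "\<dots> = mmul m A (mmul m B C) x y"
    by (simp add: mmul_def sum_distrib_left mult.assoc)
  finally show "mmul m (mmul m A B) C x y = mmul m A (mmul m B C) x y" .
qed

lemma adjoint_mmul: "adjoint (mmul m A B) = mmul m (adjoint B) (adjoint A)"
  by (auto simp: adjoint_def mmul_def mult.commute intro!: ext)

lemma adjoint_adjoint[simp]: "adjoint (adjoint A) = A"
  by (simp add: adjoint_def)

lemma mmul_cong: "opeq m A A' \<Longrightarrow> opeq m B B' \<Longrightarrow> opeq m (mmul m A B) (mmul m A' B')"
  by (auto simp: opeq_def mmul_def intro!: sum.cong)

lemma mmul_idop_right: "y \<in> bits m \<Longrightarrow> mmul m A idop x y = A x y"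
proof -
  assume y: "y \<in> bits m"
  have "mmul m A idop x y = (\<Sum>z\<in>bits m. if z = y then A x z else 0)"
    unfolding mmul_def idop_def by (rule sum.cong) auto
  then show ?thesis using y by simp
qed
lemma mmul_idop_left: "x \<in> bits m \<Longrightarrow> mmul m idop A x y = A x y"
proof -
  assume x: "x \<in> bits m"
  have "mmul m idop A x y = (\<Sum>z\<in>bits m. if x = z then A z y else 0)"
    unfolding mmul_def idop_def by (rule sum.cong) auto
  then show ?thesis using x by simp
qed

lemma opeq_idop_right: "opeq m (mmul m A idop) A"
  by (simp add: opeq_def mmul_idop_right)
lemma opeq_idop_left: "opeq m (mmul m idop A) A"
  by (simp add: opeq_def mmul_idop_left)

lemma unitary_adjoint: "unitary_op m A \<Longrightarrow> unitary_op m (adjoint A)"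
  by (simp add: unitary_op_def)

lemma unitary_mmul:
  assumes "unitary_op m A" "unitary_op m B"
  shows "unitary_op m (mmul m A B)"
proof -
  have a1: "opeq m (mmul m A (adjoint A)) idop" and a2: "opeq m (mmul m (adjoint A) A) idop"
   and b1: "opeq m (mmul m B (adjoint B)) idop" and b2: "opeq m (mmul m (adjoint B) B) idop"
    using assms by (auto simp: unitary_op_def)
  have "mmul m (mmul m A B) (adjoint (mmul m A B)) = mmul m A (mmul m (mmul m B (adjoint B)) (adjoint A))"
    by (simp add: adjoint_mmul mmul_assoc)
  moreover have "opeq m (mmul m A (mmul m (mmul m B (adjoint B)) (adjoint A))) (mmul m A (mmul m idop (adjoint A)))"
    by (intro mmul_cong opeq_refl b1)
  moreover have "opeq m (mmul m A (mmul m idop (adjoint A))) (mmul m A (adjoint A))"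
    by (intro mmul_cong opeq_refl opeq_idop_left)
  ultimately have 1: "opeq m (mmul m (mmul m A B) (adjoint (mmul m A B))) idop"
    using a1 by (metis opeq_trans)
  have "mmul m (adjoint (mmul m A B)) (mmul m A B) = mmul m (adjoint B) (mmul m (mmul m (adjoint A) A) B)"
    by (simp add: adjoint_mmul mmul_assoc)
  moreover have "opeq m (mmul m (adjoint B) (mmul m (mmul m (adjoint A) A) B)) (mmul m (adjoint B) (mmul m idop B))"
    by (intro mmul_cong opeq_refl a2)
  moreover have "opeq m (mmul m (adjoint B) (mmul m idop B)) (mmul m (adjoint B) B)"
    by (intro mmul_cong opeq_refl opeq_idop_left)
  ultimately have 2: "opeq m (mmul m (adjoint (mmul m A B)) (mmul m A B)) idop"
    using b2 by (metis opeq_trans)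
  show ?thesis using 1 2 by (simp add: unitary_op_def)
qed

lemma unitary_idop: "unitary_op m idop"
proof -
  have "adjoint idop = idop" by (auto simp: adjoint_def idop_def intro!: ext)
  then show ?thesis by (simp add: unitary_op_def opeq_idop_left)
qed




definition ag :: "nat \<Rightarrow> nat list \<Rightarrow> bool list \<Rightarrow> bool list \<Rightarrow> bool" where
  "ag m ix x z \<longleftrightarrow> (\<forall>k<m. k \<notin> set ix \<longrightarrow> x ! k = z ! k)"
definition sel :: "nat list \<Rightarrow> bool list \<Rightarrow> bool list" where
  "sel ix x = map (\<lambda>i. x ! i) ix"
definition ext :: "bool list \<Rightarrow> nat list \<Rightarrow> bool list \<Rightarrow> bool list" where
  "ext x ix w = fold (\<lambda>(i,b) z. z[i:=b]) (zip ix w) x"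

lemma apply_gate_alt: "apply_gate m g ix x y = (if ag m ix x y then g (sel ix x) (sel ix y) else 0)"
  unfolding apply_gate_def ag_def sel_def by (rule refl)

lemma ag_sym: "ag m ix x z \<Longrightarrow> ag m ix z x" by (auto simp: ag_def)
lemma ag_trans: "ag m ix x y \<Longrightarrow> ag m ix y z \<Longrightarrow> ag m ix x z" by (auto simp: ag_def)
lemma ag_iff1: "ag m ix x y \<Longrightarrow> ag m ix y z = ag m ix x z" by (auto simp: ag_def)
lemma ag_iff2: "ag m ix x y \<Longrightarrow> ag m ix z y = ag m ix x z" by (auto simp: ag_def)
lemma ag_iff3: "ag m ix x y \<Longrightarrow> ag m ix z x = ag m ix x z" by (auto simp: ag_def)
lemma ag_no: "\<not> ag m ix x y \<Longrightarrow> ag m ix x z \<Longrightarrow> \<not> ag m ix y z" by (auto simp: ag_def)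
lemma ag_no2: "\<not> ag m ix x y \<Longrightarrow> ag m ix z x \<Longrightarrow> \<not> ag m ix z y" by (auto simp: ag_def)

lemma ext_Cons: "ext x (i#ix) (b#w) = ext (x[i:=b]) ix w"
  by (simp add: ext_def)

lemma length_ext[simp]: "length (ext x ix w) = length x"
proof (induction ix arbitrary: w x)
  case Nil then show ?case by (simp add: ext_def)
next
  case (Cons i ix) then show ?case by (cases w) (auto simp: ext_def)
qed

lemma ext_nth_out: "k \<notin> set ix \<Longrightarrow> ext x ix w ! k = x ! k"
proof (induction ix arbitrary: w x)
  case Nil then show ?case by (simp add: ext_def)
next
  case (Cons i ix) then show ?case
    by (cases w) (auto simp: ext_def)
qed

lemma ext_nth_in:
  "distinct ix \<Longrightarrow> length w = length ix \<Longrightarrow> \<forall>i\<in>set ix. i < length x \<Longrightarrow> j < length ix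
   \<Longrightarrow> ext x ix w ! (ix ! j) = w ! j"
proof (induction ix arbitrary: w x j)
  case Nil then show ?case by simp
next
  case (Cons i ix)
  then obtain b w' where w: "w = b # w'" by (cases w) auto
  show ?case
  proof (cases j)
    case 0
    have "ext (x[i:=b]) ix w' ! i = x[i:=b] ! i" using Cons.prems by (intro ext_nth_out) auto
    then show ?thesis using 0 w Cons.prems by (simp add: ext_Cons)
  next
    case (Suc j')
    then show ?thesis using w Cons.prems Cons.IH[of w' "x[i:=b]" j'] by (simp add: ext_Cons)
  qed
qed

context
  fixes q m :: nat and "ix" :: "nat list"
  assumes IC: "index_choice q m ix"
begin

lemma IC_len: "length ix = q" and IC_dist: "distinct ix" and IC_lt: "\<forall>i\<in>set ix. i < m"
  using IC by (auto simp: index_choice_def strict_sorted_iff)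

lemma sel_bits: "x \<in> bits m \<Longrightarrow> sel ix x \<in> bits q"
  using IC_len by (simp add: sel_def bits_def)

lemma sel_ext: "x \<in> bits m \<Longrightarrow> w \<in> bits q \<Longrightarrow> sel ix (ext x ix w) = w"
proof -
  assume x: "x \<in> bits m" and w: "w \<in> bits q"
  show ?thesis
  proof (rule nth_equalityI)
    show "length (sel ix (ext x ix w)) = length w" using IC_len w by (simp add: sel_def bits_def)
    fix j assume "j < length (sel ix (ext x ix w))"
    then have j: "j < length ix" by (simp add: sel_def)
    have "ext x ix w ! (ix ! j) = w ! j"
      using IC_len IC_dist IC_lt x w j by (intro ext_nth_in) (auto simp: bits_def)
    then show "sel ix (ext x ix w) ! j = w ! j" using j by (simp add: sel_def)
  qed
qed

lemma ext_bits: "x \<in> bits m \<Longrightarrow> ext x ix w \<in> bits m"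
  by (simp add: bits_def)

lemma ag_ext: "x \<in> bits m \<Longrightarrow> ag m ix x (ext x ix w)"
  by (simp add: ag_def ext_nth_out)

lemma ext_sel: 
  assumes x: "x \<in> bits m" and z: "z \<in> bits m" and a: "ag m ix x z"
  shows "ext x ix (sel ix z) = z"
proof (rule nth_equalityI)
  show "length (ext x ix (sel ix z)) = length z" using x z by (simp add: bits_def)
  fix k assume k: "k < length (ext x ix (sel ix z))"
  then have km: "k < m" using x by (simp add: bits_def)
  show "ext x ix (sel ix z) ! k = z ! k"
  proof (cases "k \<in> set ix")
    case True
    then obtain j where j: "j < length ix" "k = ix ! j" by (auto simp: in_set_conv_nth)
    have "ext x ix (sel ix z) ! (ix ! j) = sel ix z ! j"
      using IC_dist IC_lt x j by (intro ext_nth_in) (auto simp: sel_def bits_def)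
    then show ?thesis using j by (simp add: sel_def)
  next
    case False
    then show ?thesis using a km by (simp add: ext_nth_out ag_def)
  qed
qed

lemma sel_inj: 
  assumes "x \<in> bits m" "z \<in> bits m" "ag m ix x z" "sel ix x = sel ix z"
  shows "x = z"
proof -
  have "ag m ix x x" by (simp add: ag_def)
  then have "ext x ix (sel ix x) = x" using ext_sel[OF assms(1) assms(1)] by simp
  moreover have "ext x ix (sel ix z) = z" using ext_sel[OF assms(1) assms(2) assms(3)] .
  ultimately show ?thesis using assms(4) by metis
qed

lemma bij_ext: "x \<in> bits m \<Longrightarrow> bij_betw (ext x ix) (bits q) {z\<in>bits m. ag m ix x z}"
  unfolding bij_betw_def
proof
  assume x: "x \<in> bits m"
  show "inj_on (ext x ix) (bits q)"
    by (rule inj_on_inverseI[where g = "sel ix"]) (rule sel_ext[OF x])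
  show "ext x ix ` bits q = {z \<in> bits m. ag m ix x z}"
  proof
    show "ext x ix ` bits q \<subseteq> {z \<in> bits m. ag m ix x z}" using ext_bits[OF x] ag_ext[OF x] by blast
    show "{z \<in> bits m. ag m ix x z} \<subseteq> ext x ix ` bits q"
    proof
      fix z assume "z \<in> {z \<in> bits m. ag m ix x z}"
      then have z: "z \<in> bits m" "ag m ix x z" by auto
      have "z = ext x ix (sel ix z)" using ext_sel[OF x z] by simp
      moreover have "sel ix z \<in> bits q" using sel_bits[OF z(1)] .
      ultimately show "z \<in> ext x ix ` bits q" by (rule image_eqI)
    qed
  qed
qed

lemma sum_ag:
  fixes F :: "bool list \<Rightarrow> 'a::comm_monoid_add"
  assumes x: "x \<in> bits m"
  shows "(\<Sum>z\<in>bits m. if ag m ix x z then F (sel ix z) else 0) = (\<Sum>w\<in>bits q. F w)"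
proof -
  have "(\<Sum>z\<in>bits m. if ag m ix x z then F (sel ix z) else 0) = (\<Sum>z\<in>{z\<in>bits m. ag m ix x z}. F (sel ix z))"
    by (simp add: sum.inter_filter)
  also have "\<dots> = (\<Sum>w\<in>bits q. F (sel ix (ext x ix w)))"
    by (rule sum.reindex_bij_betw[symmetric]) (rule bij_ext[OF x])
  also have "\<dots> = (\<Sum>w\<in>bits q. F w)"
    by (rule sum.cong) (simp_all add: sel_ext[OF x])
  finally show ?thesis .
qed

lemma unitary_apply_gate:
  assumes U: "unitary_op q g"
  shows "unitary_op m (apply_gate m g ix)"
proof -
  have g1: "\<And>a b. a \<in> bits q \<Longrightarrow> b \<in> bits q \<Longrightarrow> (\<Sum>w\<in>bits q. g a w * cnj (g b w)) = idop a b"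
    using U unfolding unitary_op_def opeq_def mmul_def adjoint_def by blast
  have g2: "\<And>a b. a \<in> bits q \<Longrightarrow> b \<in> bits q \<Longrightarrow> (\<Sum>w\<in>bits q. cnj (g w a) * g w b) = idop a b"
    using U unfolding unitary_op_def opeq_def mmul_def adjoint_def by blast
  have idsel: "ag m ix x y \<Longrightarrow> x \<in> bits m \<Longrightarrow> y \<in> bits m \<Longrightarrow> idop (sel ix x) (sel ix y) = idop x y" for x y
  proof -
    assume a: "ag m ix x y" and x: "x \<in> bits m" and y: "y \<in> bits m"
    have "sel ix x = sel ix y \<longleftrightarrow> x = y" using sel_inj[OF x y a] by blast
    then show ?thesis unfolding idop_def by simp
  qed
  have 1: "mmul m (apply_gate m g ix) (adjoint (apply_gate m g ix)) x y = idop x y"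
    if x: "x \<in> bits m" and y: "y \<in> bits m" for x y
  proof (cases "ag m ix x y")
    case True
    have "mmul m (apply_gate m g ix) (adjoint (apply_gate m g ix)) x y
        = (\<Sum>z\<in>bits m. if ag m ix x z then g (sel ix x) (sel ix z) * cnj (g (sel ix y) (sel ix z)) else 0)"
      unfolding mmul_def adjoint_def apply_gate_alt
      by (rule sum.cong) (simp_all add: ag_iff1[OF True] ag_iff2[OF True] ag_iff3[OF True])
    also have "\<dots> = (\<Sum>w\<in>bits q. g (sel ix x) w * cnj (g (sel ix y) w))"
      by (rule sum_ag[OF x])
    also have "\<dots> = idop x y" using g1 sel_bits x y idsel True by simp
    finally show ?thesis .
  next
    case False
    then have "x \<noteq> y" by (auto simp: ag_def)
    moreover have "mmul m (apply_gate m g ix) (adjoint (apply_gate m g ix)) x y = 0"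
      unfolding mmul_def adjoint_def apply_gate_alt
    proof (rule sum.neutral, rule ballI)
      fix z
      show "(if ag m ix x z then g (sel ix x) (sel ix z) else 0) * cnj (if ag m ix y z then g (sel ix y) (sel ix z) else 0) = 0"
        by (cases "ag m ix x z") (simp_all add: ag_no[OF False])
    qed
    ultimately show ?thesis by (simp add: idop_def)
  qed
  have 2: "mmul m (adjoint (apply_gate m g ix)) (apply_gate m g ix) x y = idop x y"
    if x: "x \<in> bits m" and y: "y \<in> bits m" for x y
  proof (cases "ag m ix x y")
    case True
    have "mmul m (adjoint (apply_gate m g ix)) (apply_gate m g ix) x y
        = (\<Sum>z\<in>bits m. if ag m ix x z then cnj (g (sel ix z) (sel ix x)) * g (sel ix z) (sel ix y) else 0)"
      unfolding mmul_def adjoint_def apply_gate_alt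
      by (rule sum.cong) (simp_all add: ag_iff1[OF True] ag_iff2[OF True] ag_iff3[OF True])
    also have "\<dots> = (\<Sum>w\<in>bits q. cnj (g w (sel ix x)) * g w (sel ix y))"
      by (rule sum_ag[OF x])
    also have "\<dots> = idop x y" using g2 sel_bits x y idsel True by simp
    finally show ?thesis .
  next
    case False
    then have "x \<noteq> y" by (auto simp: ag_def)
    moreover have "mmul m (adjoint (apply_gate m g ix)) (apply_gate m g ix) x y = 0"
      unfolding mmul_def adjoint_def apply_gate_alt
    proof (rule sum.neutral, rule ballI)
      fix z
      show "cnj (if ag m ix z x then g (sel ix z) (sel ix x) else 0) * (if ag m ix z y then g (sel ix z) (sel ix y) else 0) = 0"
        by (cases "ag m ix z x") (simp_all add: ag_no2[OF False])
    qed
    ultimately show ?thesis by (simp add: idop_def)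
  qed
  show ?thesis using 1 2 by (simp add: unitary_op_def opeq_def)
qed

end

lemma unitary_circuit: "q_circuit q m gs \<Longrightarrow> unitary_op m (circuit_op m gs)"
proof (induction gs)
  case Nil then show ?case by (simp add: unitary_idop)
next
  case (Cons a gs)
  obtain g "ix" where a: "a = (g, ix)" by (cases a)
  have "unitary_op q g" "index_choice q m ix" "q_circuit q m gs"
    using Cons.prems a by (auto simp: q_circuit_def)
  then show ?case using Cons.IH a by (auto intro!: unitary_mmul unitary_apply_gate)
qed




definition frob :: "nat \<Rightarrow> qop \<Rightarrow> real" where
  "frob m A = L2_set (\<lambda>p. cmod (A (fst p) (snd p))) (bits m \<times> bits m)"

lemma frob_def2: "frob m A = sqrt (\<Sum>x\<in>bits m. \<Sum>y\<in>bits m. (cmod (A x y))^2)"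
  unfolding frob_def L2_set_def by (simp add: sum.cartesian_product case_prod_beta)

lemma frob_nonneg: "0 \<le> frob m A" by (simp add: frob_def L2_set_nonneg)

lemma frob_add: "frob m (\<lambda>x y. A x y + B x y) \<le> frob m A + frob m B"
proof -
  have "frob m (\<lambda>x y. A x y + B x y) \<le> L2_set (\<lambda>p. cmod (A (fst p) (snd p)) + cmod (B (fst p) (snd p))) (bits m \<times> bits m)"
    unfolding frob_def by (rule L2_set_mono) (auto intro: norm_triangle_ineq)
  also have "\<dots> \<le> frob m A + frob m B" unfolding frob_def by (rule L2_set_triangle_ineq)
  finally show ?thesis .
qed

lemma frob_opeq: "opeq m A B \<Longrightarrow> frob m A = frob m B"
  unfolding frob_def2 opeq_def by (simp cong: sum.cong)

lemma frob_entry: "x \<in> bits m \<Longrightarrow> y \<in> bits m \<Longrightarrow> cmod (A x y) \<le> frob m A"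
  unfolding frob_def using member_le_L2_set[of "bits m \<times> bits m" "(x,y)" "\<lambda>p. cmod (A (fst p) (snd p))"]
  by simp

lemma frob_adjoint: "frob m (adjoint A) = frob m A"
  unfolding frob_def2 adjoint_def by (subst sum.swap) simp

lemma col_norm:
  assumes U: "unitary_op m U" and y: "y \<in> bits m"
  shows "(\<Sum>x\<in>bits m. (cmod (mmul m U D x y))^2) = (\<Sum>z\<in>bits m. (cmod (D z y))^2)"
proof -
  have I: "(\<Sum>x\<in>bits m. cnj (U x w) * U x z) = idop w z" if "w \<in> bits m" "z \<in> bits m" for w z
    using U that unfolding unitary_op_def opeq_def mmul_def adjoint_def by blast
  have "complex_of_real (\<Sum>x\<in>bits m. (cmod (mmul m U D x y))^2)
      = (\<Sum>x\<in>bits m. mmul m U D x y * cnj (mmul m U D x y))"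
    by (simp only: of_real_sum complex_norm_square)
  also have "\<dots> = (\<Sum>x\<in>bits m. \<Sum>w\<in>bits m. \<Sum>z\<in>bits m. U x z * D z y * (cnj (U x w) * cnj (D w y)))"
    by (simp add: mmul_def sum_distrib_left sum_distrib_right)
  also have "\<dots> = (\<Sum>w\<in>bits m. \<Sum>z\<in>bits m. \<Sum>x\<in>bits m. D z y * cnj (D w y) * (cnj (U x w) * U x z))"
  proof -
    have "(\<Sum>x\<in>bits m. \<Sum>w\<in>bits m. \<Sum>z\<in>bits m. U x z * D z y * (cnj (U x w) * cnj (D w y)))
       = (\<Sum>w\<in>bits m. \<Sum>x\<in>bits m. \<Sum>z\<in>bits m. U x z * D z y * (cnj (U x w) * cnj (D w y)))"
      by (rule sum.swap)
    also have "\<dots> = (\<Sum>w\<in>bits m. \<Sum>z\<in>bits m. \<Sum>x\<in>bits m. U x z * D z y * (cnj (U x w) * cnj (D w y)))"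
      by (rule sum.cong[OF refl], rule sum.swap)
    also have "\<dots> = (\<Sum>w\<in>bits m. \<Sum>z\<in>bits m. \<Sum>x\<in>bits m. D z y * cnj (D w y) * (cnj (U x w) * U x z))"
      by (intro sum.cong refl) (simp add: mult_ac)
    finally show ?thesis .
  qed
  also have "\<dots> = (\<Sum>w\<in>bits m. \<Sum>z\<in>bits m. D z y * cnj (D w y) * idop w z)"
    by (simp add: sum_distrib_left[symmetric] I)
  also have "\<dots> = (\<Sum>w\<in>bits m. D w y * cnj (D w y))"
  proof (rule sum.cong[OF refl])
    fix w assume w: "w \<in> bits m"
    have "(\<Sum>z\<in>bits m. D z y * cnj (D w y) * idop w z) = (\<Sum>z\<in>bits m. if w = z then D w y * cnj (D w y) else 0)"
      by (rule sum.cong) (auto simp: idop_def)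
    then show "(\<Sum>z\<in>bits m. D z y * cnj (D w y) * idop w z) = D w y * cnj (D w y)" using w by simp
  qed
  also have "\<dots> = complex_of_real (\<Sum>w\<in>bits m. (cmod (D w y))^2)"
    by (simp only: of_real_sum complex_norm_square)
  finally show ?thesis by (simp only: of_real_eq_iff)
qed

lemma frob_left_unitary: "unitary_op m U \<Longrightarrow> frob m (mmul m U D) = frob m D"
proof -
  assume U: "unitary_op m U"
  have "(\<Sum>x\<in>bits m. \<Sum>y\<in>bits m. (cmod (mmul m U D x y))^2) = (\<Sum>y\<in>bits m. \<Sum>x\<in>bits m. (cmod (mmul m U D x y))^2)"
    by (rule sum.swap)
  also have "\<dots> = (\<Sum>y\<in>bits m. \<Sum>z\<in>bits m. (cmod (D z y))^2)"
    by (rule sum.cong[OF refl]) (rule col_norm[OF U])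
  also have "\<dots> = (\<Sum>z\<in>bits m. \<Sum>y\<in>bits m. (cmod (D z y))^2)"
    by (rule sum.swap)
  finally show ?thesis unfolding frob_def2 by simp
qed

lemma frob_right_unitary: "unitary_op m U \<Longrightarrow> frob m (mmul m D U) = frob m D"
  by (metis adjoint_mmul frob_adjoint frob_left_unitary unitary_adjoint)

lemma frob_apply_gate:
  assumes IC: "index_choice q m ix" and e: "0 \<le> \<epsilon>"
    and h: "\<forall>a\<in>bits q. \<forall>b\<in>bits q. cmod (h a b) \<le> \<epsilon>"
  shows "frob m (apply_gate m h ix) \<le> sqrt (2^m * 2^q) * \<epsilon>"
proof -
  have "(\<Sum>x\<in>bits m. \<Sum>z\<in>bits m. (cmod (apply_gate m h ix x z))^2)
      = (\<Sum>x\<in>bits m. \<Sum>z\<in>bits m. if ag m ix x z then (cmod (h (sel ix x) (sel ix z)))^2 else 0)"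
    by (intro sum.cong refl) (simp add: apply_gate_alt)
  also have "\<dots> = (\<Sum>x\<in>bits m. \<Sum>w\<in>bits q. (cmod (h (sel ix x) w))^2)"
    by (rule sum.cong[OF refl]) (rule sum_ag[OF IC])
  also have "\<dots> \<le> (\<Sum>x\<in>bits m. \<Sum>w\<in>bits q. \<epsilon>^2)"
    by (intro sum_mono power_mono) (use h sel_bits[OF IC] in auto)
  also have "\<dots> = (2^m * 2^q) * \<epsilon>^2" by (simp add: card_bits)
  finally have "frob m (apply_gate m h ix) \<le> sqrt ((2^m * 2^q) * \<epsilon>^2)"
    unfolding frob_def2 by (rule real_sqrt_le_mono)
  also have "\<dots> = sqrt (2^m * 2^q) * \<epsilon>" using e by (simp add: real_sqrt_mult)
  finally show ?thesis .
qed




lemma apply_gate_diff: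
  "(\<lambda>x y. apply_gate m g1 ix x y - apply_gate m g2 ix x y) = apply_gate m (\<lambda>a b. g1 a b - g2 a b) ix"
  by (simp add: apply_gate_alt fun_eq_iff)

lemma mmul_diff:
  "mmul m A1 P1 x y - mmul m A2 P2 x y
   = mmul m (\<lambda>x y. A1 x y - A2 x y) P1 x y + mmul m A2 (\<lambda>x y. P1 x y - P2 x y) x y"
  by (simp add: mmul_def sum_subtractf[symmetric] sum.distrib[symmetric] algebra_simps)

lemma circ_diff:
  assumes "list_all2 (\<lambda>(g1,i1) (g2,i2). i1 = i2 \<and> (\<forall>a\<in>bits q. \<forall>b\<in>bits q. cmod (g1 a b - g2 a b) \<le> \<epsilon>)) gs1 gs2"
    and "q_circuit q m gs1" and "q_circuit q m gs2" and e: "0 \<le> \<epsilon>"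
  shows "frob m (\<lambda>x y. circuit_op m gs1 x y - circuit_op m gs2 x y) \<le> length gs1 * (sqrt (2^m*2^q) * \<epsilon>)"
  using assms(1-3)
proof (induction rule: list_all2_induct)
  case Nil
  then show ?case by (simp add: frob_def2)
next
  case (Cons p1 gs1 p2 gs2)
  obtain g1 i1 where p1: "p1 = (g1, i1)" by (cases p1)
  obtain g2 i2 where p2: "p2 = (g2, i2)" by (cases p2)
  have i: "i1 = i2" and close: "\<forall>a\<in>bits q. \<forall>b\<in>bits q. cmod (g1 a b - g2 a b) \<le> \<epsilon>"
    using Cons.hyps(1) p1 p2 by auto
  have qc1: "q_circuit q m gs1" and qc2: "q_circuit q m gs2" and U2: "unitary_op q g2"
    and IC: "index_choice q m i1"
    using Cons.prems p1 p2 i by (auto simp: q_circuit_def)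
  define P1 where "P1 = circuit_op m gs1"
  define P2 where "P2 = circuit_op m gs2"
  define A1 where "A1 = apply_gate m g1 i1"
  define A2 where "A2 = apply_gate m g2 i1"
  have uP1: "unitary_op m P1" unfolding P1_def by (rule unitary_circuit[OF qc1])
  have uA2: "unitary_op m A2" unfolding A2_def by (rule unitary_apply_gate[OF IC U2])
  have "frob m (\<lambda>x y. circuit_op m (p1 # gs1) x y - circuit_op m (p2 # gs2) x y)
      = frob m (\<lambda>x y. mmul m (\<lambda>x y. A1 x y - A2 x y) P1 x y + mmul m A2 (\<lambda>x y. P1 x y - P2 x y) x y)"
    using p1 p2 i by (simp add: A1_def A2_def P1_def P2_def mmul_diff)
  also have "\<dots> \<le> frob m (mmul m (\<lambda>x y. A1 x y - A2 x y) P1) + frob m (mmul m A2 (\<lambda>x y. P1 x y - P2 x y))"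
    by (rule frob_add)
  also have "\<dots> = frob m (\<lambda>x y. A1 x y - A2 x y) + frob m (\<lambda>x y. P1 x y - P2 x y)"
    by (simp add: frob_right_unitary[OF uP1] frob_left_unitary[OF uA2])
  also have "frob m (\<lambda>x y. A1 x y - A2 x y) \<le> sqrt (2^m*2^q) * \<epsilon>"
    unfolding A1_def A2_def apply_gate_diff by (rule frob_apply_gate[OF IC e close])
  also have "frob m (\<lambda>x y. P1 x y - P2 x y) \<le> length gs1 * (sqrt (2^m*2^q) * \<epsilon>)"
    unfolding P1_def P2_def by (rule Cons.IH[OF qc1 qc2])
  finally show ?case by (simp add: algebra_simps)
qed




lemma round_eq_close: "round (u::real) = round v \<Longrightarrow> \<bar>u - v\<bar> \<le> 1"
  using of_int_round_abs_le[of u] of_int_round_abs_le[of v] by linarith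

lemma round_bound: "\<bar>u::real\<bar> \<le> of_int d \<Longrightarrow> round u \<in> {-d..d}"
proof -
  assume a: "\<bar>u\<bar> \<le> of_int d"
  have h: "\<bar>of_int (round u) - u\<bar> \<le> 1/2" by (rule of_int_round_abs_le)
  have "of_int (round u) < of_int d + (1::real)" "of_int (-d) < of_int (round u) + (1::real)"
    using a h by linarith+
  then have "round u < d + 1" "-d < round u + 1" by linarith+
  then show ?thesis by simp
qed

lemma unitary_entry_le1:
  assumes U: "unitary_op q g" and a: "a \<in> bits q" and b: "b \<in> bits q"
  shows "cmod (g a b) \<le> 1"
proof -
  have "(\<Sum>w\<in>bits q. g a w * cnj (g a w)) = idop a a"
    using U a unfolding unitary_op_def opeq_def mmul_def adjoint_def by blast
  then have "complex_of_real (\<Sum>w\<in>bits q. (cmod (g a w))^2) = 1"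
    by (simp only: of_real_sum complex_norm_square) (simp add: idop_def)
  then have s: "(\<Sum>w\<in>bits q. (cmod (g a w))^2) = 1"
    by (metis of_real_eq_1_iff)
  have "(cmod (g a b))^2 \<le> (\<Sum>w\<in>bits q. (cmod (g a w))^2)"
    by (rule member_le_sum) (use b in auto)
  then have "(cmod (g a b))^2 \<le> 1" using s by simp
  then show ?thesis by (simp add: power_le_one_iff abs_le_square_iff)
qed

lemma card_F: "card {f :: bool list \<Rightarrow> bool. \<forall>x. x \<notin> bits n \<longrightarrow> \<not> f x} = 2 ^ (2 ^ n)"
proof -
  have "bij_betw (\<lambda>f. {x. f x}) {f :: bool list \<Rightarrow> bool. \<forall>x. x \<notin> bits n \<longrightarrow> \<not> f x} (Pow (bits n))"
    unfolding bij_betw_def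
  proof
    show "inj_on (\<lambda>f. {x. f x}) {f :: bool list \<Rightarrow> bool. \<forall>x. x \<notin> bits n \<longrightarrow> \<not> f x}"
      by (rule inj_onI) (simp add: set_eq_iff fun_eq_iff)
    show "(\<lambda>f. {x. f x}) ` {f. \<forall>x. x \<notin> bits n \<longrightarrow> \<not> f x} = Pow (bits n)"
    proof
      show "(\<lambda>f. {x. f x}) ` {f. \<forall>x. x \<notin> bits n \<longrightarrow> \<not> f x} \<subseteq> Pow (bits n)" by auto
      show "Pow (bits n) \<subseteq> (\<lambda>f. {x. f x}) ` {f. \<forall>x. x \<notin> bits n \<longrightarrow> \<not> f x}"
      proof
        fix S assume "S \<in> Pow (bits n)"
        then have "(\<lambda>x. x \<in> S) \<in> {f. \<forall>x. x \<notin> bits n \<longrightarrow> \<not> f x}" "S = {x. (\<lambda>x. x \<in> S) x}" by auto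
        then show "S \<in> (\<lambda>f. {x. f x}) ` {f. \<forall>x. x \<notin> bits n \<longrightarrow> \<not> f x}" by blast
      qed
    qed
  qed
  then have "card {f :: bool list \<Rightarrow> bool. \<forall>x. x \<notin> bits n \<longrightarrow> \<not> f x} = card (Pow (bits n))"
    by (rule bij_betw_same_card)
  then show ?thesis by (simp add: card_Pow card_bits)
qed

lemma qcc_witness:
  assumes "qcc q m U = enat r"
  shows "\<exists>gs. q_circuit q m gs \<and> opeq m (circuit_op m gs) U \<and> length gs = r"
proof -
  let ?S = "(\<lambda>gs. enat (length gs)) ` {gs. q_circuit q m gs \<and> opeq m (circuit_op m gs) U}"
  have q: "qcc q m U = Inf ?S" by (simp add: qcc_def)
  have ne: "?S \<noteq> {}"
  proof
    assume "?S = {}"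
    then have "qcc q m U = \<infinity>" using q by (simp add: Inf_enat_def)
    then show False using assms by simp
  qed
  from ne obtain s0 where "s0 \<in> ?S" by blast
  then have "(LEAST x. x \<in> ?S) \<in> ?S" by (rule LeastI)
  moreover have "Inf ?S = (LEAST x. x \<in> ?S)" by (subst Inf_enat_def) (simp only: ne if_False)
  ultimately have "Inf ?S \<in> ?S" by simp
  then show ?thesis using assms q by auto
qed

lemma count_arith:
  fixes n q L A Dd E K :: nat
  assumes n: "n > 0" and K: "K = 2 * 4^q" and E: "E = 2 + q + K * (q + 6)"
    and L: "L * (n * E) < 2^n" and Dd: "Dd = 2 * (L + 1) * 2^(n + 1 + q)"
    and A: "A \<le> (n+1)^q * (2*Dd+1)^K"
    and c: "2 ^ (2 ^ n) \<le> (L+1) * (A+1)^L"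
  shows False
proof -
  have nE: "n * E \<ge> 1" using n E by simp
  have L1: "L + 1 \<le> 2^n"
  proof -
    have "L \<le> L * (n*E)" using nE by simp
    then show ?thesis using L by linarith
  qed
  have n1: "n + 1 \<le> 2^n" using n
    by (metis Suc_eq_plus1 Suc_leI less_exp)
  have "(L+1) * 2^(n+1+q) \<le> 2^n * 2^(n+1+q)" by (rule mult_right_mono[OF L1]) simp
  then have "Dd \<le> 2 * 2^n * 2^(n+1+q)" unfolding Dd by simp
  also have "\<dots> = 2^(2*n+q+2)" by (simp add: power_add[symmetric])
  finally have D1: "Dd \<le> 2^(2*n+q+2)" .
  have "2*Dd+1 \<le> 2^(2*n+q+4)"
  proof -
    have p1: "1 \<le> (2::nat)^(2*n+q+2)" by simp
    have "2*Dd + 1 \<le> 2 * 2^(2*n+q+2) + 2^(2*n+q+2)" using D1 p1 by linarith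
    also have "\<dots> \<le> 2^(2*n+q+4)" by (simp add: power_add)
    finally show ?thesis .
  qed
  then have D2: "(2*Dd+1)^K \<le> 2^(K*(2*n+q+4))"
    by (metis power_mono power_mult zero_le mult.commute)
  have N1: "(n+1)^q \<le> 2^(n*q)" using n1 by (metis power_mono power_mult zero_le)
  have "(L+1) * (A+1)^L \<le> 2^L * (A+1)^L"
    using L1 by (intro mult_right_mono) (simp_all add: Suc_leI[OF less_exp[of L]] flip: Suc_eq_plus1)
  also have "\<dots> = (2*(A+1))^L" by (simp only: power_mult_distrib)
  also have "\<dots> \<le> (2^(n*E))^L"
  proof (rule power_mono)
    have pos: "1 \<le> (n+1)^q * (2*Dd+1)^K" by simp
    have gen: "\<And>X::nat. A \<le> X \<Longrightarrow> 1 \<le> X \<Longrightarrow> 2*(A+1) \<le> 4 * X" by arith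
    have "2*(A+1) \<le> 4 * ((n+1)^q * (2*Dd+1)^K)" by (rule gen[OF A pos])
    also have "\<dots> \<le> 4 * (2^(n*q) * 2^(K*(2*n+q+4)))"
      by (intro mult_left_mono mult_mono N1 D2) simp_all
    also have "\<dots> = 2^(2 + n*q + K*(2*n+q+4))" by (simp add: power_add)
    also have "\<dots> \<le> 2^(n*E)"
    proof (rule power_increasing)
      have a1: "K*q \<le> K*(n*q)" by (rule mult_le_mono2) (use n in simp)
      have a2: "K*4 \<le> K*(n*4)" by (rule mult_le_mono2) (use n in simp)
      have a3: "2 \<le> n*2" using n by simp
      have e1: "n*E = n*2 + n*q + K*(n*q) + K*(n*4) + K*(n*2)" unfolding E by (simp add: algebra_simps)
      have e2: "2 + n*q + K*(2*n+q+4) = 2 + n*q + K*(n*2) + K*q + K*4" by (simp add: algebra_simps)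
      show "2 + n*q + K*(2*n+q+4) \<le> n*E" using a1 a2 a3 e1 e2 by linarith
    qed simp
    finally show "2*(A+1) \<le> 2^(n*E)" .
  qed simp
  also have "\<dots> = 2^(n*E*L)" by (simp add: power_mult)
  finally have "2^(2^n) \<le> (2::nat)^(n*E*L)" using c by linarith
  then have "2^n \<le> n*E*L" by simp
  then show False using L by (simp add: mult.commute)
qed




lemma Uf_entry:
  assumes x: "x \<in> bits n"
  shows "U_f n f (x @ [b]) (x @ [False]) = (if b = f x then 1 else 0)"
  using x by (simp add: U_f_def bits_def nth_append)

lemma sqrt_le_self': "1 \<le> (x::real) \<Longrightarrow> sqrt x \<le> x"
proof -
  assume x: "1 \<le> x"
  have "x \<le> x * x" using x by (simp add: mult_le_cancel_left1)
  then have "sqrt x \<le> sqrt (x * x)" by (rule real_sqrt_le_mono)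
  then show ?thesis using x by simp
qed

lemma main_count:
  fixes q n :: nat
  assumes n: "n > 0"
  defines "K \<equiv> 2*4^q"
  defines "E \<equiv> 2 + q + K*(q+6)"
  shows "\<exists>f. \<not> (\<exists>gs. q_circuit q (n+1) gs \<and> opeq (n+1) (circuit_op (n+1) gs) (U_f n f) \<and> length gs * (n*E) < 2^n)"
proof (rule ccontr)
  define m where "m = n + 1"
  assume "\<not> ?thesis"
  then have H: "\<forall>f. \<exists>gs. q_circuit q m gs \<and> opeq m (circuit_op m gs) (U_f n f) \<and> length gs * (n*E) < 2^n"
    unfolding m_def by blast
  have nE: "n*E > 0" using n unfolding E_def by simp
  define L where "L = (2^n - 1) div (n*E)"
  have len: "length gs \<le> L" if "length gs * (n*E) < 2^n" for gs :: "(qop \<times> nat list) list"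
  proof -
    have "length gs * (n*E) \<le> 2^n - 1" using that by linarith
    then show ?thesis unfolding L_def using nE by (simp add: less_eq_div_iff_mult_less_eq)
  qed
  have LnE: "L * (n*E) < 2^n"
  proof -
    have "(n*E) * L \<le> 2^n - 1" unfolding L_def by (rule times_div_less_eq_dividend)
    moreover have "(0::nat) < 2^n" by simp
    ultimately have "L * (n*E) \<le> 2^n - 1" "(0::nat) < 2^n" by (simp_all add: mult.commute)
    then show ?thesis by linarith
  qed
  define Dd where "Dd = 2*(L+1)*2^(n+1+q)"
  have Dpos: "Dd > 0" unfolding Dd_def by simp
  define code :: "qop \<Rightarrow> (bool list \<times> bool list \<Rightarrow> int \<times> int)" where
    "code g = restrict (\<lambda>p. (round (Re (g (fst p) (snd p)) * real Dd), round (Im (g (fst p) (snd p)) * real Dd))) (bits q \<times> bits q)" for g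
  define ccode where "ccode gs = map (\<lambda>(g,ix). (ix, code g)) gs" for gs :: "(qop \<times> nat list) list"
  define IC where "IC = {ix. index_choice q m ix}"
  define Bx where "Bx = {-int Dd..int Dd} \<times> {-int Dd..int Dd}"
  define Al where "Al = IC \<times> PiE (bits q \<times> bits q) (\<lambda>_. Bx)"
  define F where "F = {f :: bool list \<Rightarrow> bool. \<forall>x. x \<notin> bits n \<longrightarrow> \<not> f x}"
  define gsel where "gsel f = (SOME gs. q_circuit q m gs \<and> opeq m (circuit_op m gs) (U_f n f) \<and> length gs * (n*E) < 2^n)" for f
  have gsel: "q_circuit q m (gsel f) \<and> opeq m (circuit_op m (gsel f)) (U_f n f) \<and> length (gsel f) * (n*E) < 2^n" for f
  proof -
    have "\<exists>gs. q_circuit q m gs \<and> opeq m (circuit_op m gs) (U_f n f) \<and> length gs * (n*E) < 2^n"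
      using H by blast
    then show ?thesis unfolding gsel_def by (rule someI_ex)
  qed
  define W where "W = {xs. set xs \<subseteq> Al \<and> length xs \<le> L}"

  have IC_sub: "IC \<subseteq> {xs. set xs \<subseteq> {..<m} \<and> length xs = q}"
    unfolding IC_def index_choice_def by auto
  have finIC: "finite IC" by (rule finite_subset[OF IC_sub]) (rule finite_lists_length_eq, simp)
  have cardIC: "card IC \<le> m^q"
  proof -
    have "card IC \<le> card {xs. set xs \<subseteq> {..<m} \<and> length xs = q}"
      by (rule card_mono[OF _ IC_sub]) (rule finite_lists_length_eq, simp)
    also have "\<dots> = m^q" by (simp add: card_lists_length_eq)
    finally show ?thesis .
  qed
  have cardBx: "card Bx = (2*Dd+1)^2"
  proof -
    have "card {-int Dd..int Dd} = 2*Dd+1" by simp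
    then show ?thesis unfolding Bx_def by (simp only: card_cartesian_product power2_eq_square)
  qed
  have finBx: "finite Bx" unfolding Bx_def by simp
  have cardPi: "card (PiE (bits q \<times> bits q) (\<lambda>_. Bx)) = (2*Dd+1)^K"
  proof -
    have "card (PiE (bits q \<times> bits q) (\<lambda>_. Bx)) = card Bx ^ card (bits q \<times> bits q)"
      by (simp add: card_PiE)
    also have "\<dots> = ((2*Dd+1)^2)^(2^q*2^q)" by (simp add: cardBx card_cartesian_product card_bits)
    also have "\<dots> = (2*Dd+1)^K" unfolding K_def
      by (simp add: power_mult[symmetric] power_mult_distrib[symmetric])
    finally show ?thesis .
  qed
  have finAl: "finite Al" unfolding Al_def using finIC finBx by (simp add: finite_PiE)
  have cardAl: "card Al \<le> m^q * (2*Dd+1)^K"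
    unfolding Al_def card_cartesian_product cardPi using cardIC by simp

  have W_eq: "W = (\<Union>r\<in>{..L}. {xs. set xs \<subseteq> Al \<and> length xs = r})" unfolding W_def by auto
  have finW: "finite W" unfolding W_eq using finAl by (auto intro: finite_lists_length_eq)
  have cardW: "card W \<le> (L+1) * (card Al + 1)^L"
  proof -
    have "card W \<le> (\<Sum>r\<in>{..L}. card {xs. set xs \<subseteq> Al \<and> length xs = r})"
      unfolding W_eq by (rule card_UN_le) simp
    also have "\<dots> = (\<Sum>r\<in>{..L}. card Al ^ r)" using finAl by (simp add: card_lists_length_eq)
    also have "\<dots> \<le> (\<Sum>r\<in>{..L}. (card Al + 1)^L)"
    proof (rule sum_mono)
      fix r assume "r \<in> {..L}"
      then have "r \<le> L" by simp
      have "card Al ^ r \<le> (card Al + 1)^r" by (rule power_mono) simp_all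
      also have "\<dots> \<le> (card Al + 1)^L" by (rule power_increasing[OF \<open>r \<le> L\<close>]) simp
      finally show "card Al ^ r \<le> (card Al + 1)^L" .
    qed
    also have "\<dots> = (L+1) * (card Al + 1)^L" by simp
    finally show ?thesis .
  qed

  have img: "ccode (gsel f) \<in> W" for f
  proof -
    have qc: "q_circuit q m (gsel f)" and l: "length (gsel f) * (n*E) < 2^n" using gsel by auto
    have "set (ccode (gsel f)) \<subseteq> Al"
    proof
      fix c assume "c \<in> set (ccode (gsel f))"
      then obtain g ix where gi: "(g, ix) \<in> set (gsel f)" and c: "c = (ix, code g)"
        unfolding ccode_def by auto
      have U: "unitary_op q g" and ic: "index_choice q m ix" using qc gi by (auto simp: q_circuit_def)
      have "code g \<in> PiE (bits q \<times> bits q) (\<lambda>_. Bx)"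
        unfolding code_def restrict_PiE_iff
      proof
        fix p assume p: "p \<in> bits q \<times> bits q"
        have e: "cmod (g (fst p) (snd p)) \<le> 1" using unitary_entry_le1[OF U] p by auto
        have "\<bar>Re (g (fst p) (snd p)) * real Dd\<bar> \<le> of_int (int Dd)"
        proof -
          have "\<bar>Re (g (fst p) (snd p))\<bar> \<le> 1" using abs_Re_le_cmod e by (rule order_trans)
          then show ?thesis by (simp add: abs_mult mult_left_le_one_le)
        qed
        moreover have "\<bar>Im (g (fst p) (snd p)) * real Dd\<bar> \<le> of_int (int Dd)"
        proof -
          have "\<bar>Im (g (fst p) (snd p))\<bar> \<le> 1" using abs_Im_le_cmod e by (rule order_trans)
          then show ?thesis by (simp add: abs_mult mult_left_le_one_le)
        qed
        ultimately show "(round (Re (g (fst p) (snd p)) * real Dd), round (Im (g (fst p) (snd p)) * real Dd)) \<in> Bx"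
          unfolding Bx_def using round_bound by auto
      qed
      then show "c \<in> Al" unfolding Al_def IC_def c using ic by simp
    qed
    moreover have "length (ccode (gsel f)) \<le> L" unfolding ccode_def using len[OF l] by simp
    ultimately show ?thesis unfolding W_def by simp
  qed

  have inj: "inj_on (\<lambda>f. ccode (gsel f)) F"
  proof (rule inj_onI)
    fix f1 f2 assume f1: "f1 \<in> F" and f2: "f2 \<in> F" and eq: "ccode (gsel f1) = ccode (gsel f2)"
    show "f1 = f2"
    proof (rule ccontr)
      assume ne: "f1 \<noteq> f2"
      define gs1 where "gs1 = gsel f1"
      define gs2 where "gs2 = gsel f2"
      have qc1: "q_circuit q m gs1" and op1: "opeq m (circuit_op m gs1) (U_f n f1)"
        and l1: "length gs1 * (n*E) < 2^n" using gsel unfolding gs1_def by auto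
      have qc2: "q_circuit q m gs2" and op2: "opeq m (circuit_op m gs2) (U_f n f2)"
        using gsel unfolding gs2_def by auto
      have eq': "map (\<lambda>(g,ix). (ix, code g)) gs1 = map (\<lambda>(g,ix). (ix, code g)) gs2"
        using eq unfolding gs1_def gs2_def ccode_def .
      have lenEq: "length gs1 = length gs2" using arg_cong[OF eq', of length] by simp
      have R: "list_all2 (\<lambda>(g1,i1) (g2,i2). i1 = i2 \<and> (\<forall>a\<in>bits q. \<forall>b\<in>bits q. cmod (g1 a b - g2 a b) \<le> 2 / real Dd)) gs1 gs2"
        unfolding list_all2_conv_all_nth
      proof (intro conjI allI impI lenEq)
        fix j assume j: "j < length gs1"
        obtain g1 i1 where p1: "gs1 ! j = (g1, i1)" by (cases "gs1 ! j")
        obtain g2 i2 where p2: "gs2 ! j = (g2, i2)" by (cases "gs2 ! j")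
        have "map (\<lambda>(g,ix). (ix, code g)) gs1 ! j = map (\<lambda>(g,ix). (ix, code g)) gs2 ! j"
          using eq' by simp
        then have "(i1, code g1) = (i2, code g2)" using j lenEq p1 p2 by simp
        then have ii: "i1 = i2" and cc: "code g1 = code g2" by auto
        have close: "cmod (g1 a b - g2 a b) \<le> 2 / real Dd" if a: "a \<in> bits q" and b: "b \<in> bits q" for a b
        proof -
          have "code g1 (a,b) = code g2 (a,b)" using cc by simp
          then have r1: "round (Re (g1 a b) * real Dd) = round (Re (g2 a b) * real Dd)"
            and r2: "round (Im (g1 a b) * real Dd) = round (Im (g2 a b) * real Dd)"
            using a b unfolding code_def by auto
          have "\<bar>Re (g1 a b) * real Dd - Re (g2 a b) * real Dd\<bar> \<le> 1" by (rule round_eq_close[OF r1])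
          then have "\<bar>Re (g1 a b - g2 a b)\<bar> * real Dd \<le> 1"
            by (simp add: left_diff_distrib[symmetric] abs_mult)
          then have re: "\<bar>Re (g1 a b - g2 a b)\<bar> \<le> 1 / real Dd" using Dpos by (simp add: le_divide_eq)
          have "\<bar>Im (g1 a b) * real Dd - Im (g2 a b) * real Dd\<bar> \<le> 1" by (rule round_eq_close[OF r2])
          then have "\<bar>Im (g1 a b - g2 a b)\<bar> * real Dd \<le> 1"
            by (simp add: left_diff_distrib[symmetric] abs_mult)
          then have im: "\<bar>Im (g1 a b - g2 a b)\<bar> \<le> 1 / real Dd" using Dpos by (simp add: le_divide_eq)
          have "cmod (g1 a b - g2 a b) \<le> \<bar>Re (g1 a b - g2 a b)\<bar> + \<bar>Im (g1 a b - g2 a b)\<bar>" by (rule cmod_le)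
          also have "\<dots> \<le> 2 / real Dd" using re im by simp
          finally show ?thesis .
        qed
        show "(case gs1 ! j of (g1, i1) \<Rightarrow> \<lambda>(g2, i2). i1 = i2 \<and> (\<forall>a\<in>bits q. \<forall>b\<in>bits q. cmod (g1 a b - g2 a b) \<le> 2 / real Dd)) (gs2 ! j)"
          using p1 p2 ii close by simp
      qed
      have bnd: "frob m (\<lambda>x y. circuit_op m gs1 x y - circuit_op m gs2 x y) \<le> length gs1 * (sqrt (2^m*2^q) * (2 / real Dd))"
        by (rule circ_diff[OF R qc1 qc2]) simp
      have small: "real (length gs1) * (sqrt (2^m*2^q) * (2 / real Dd)) < 1"
      proof -
        have S: "sqrt (2^m*2^q) \<le> (2::real)^(n+1+q)"
        proof -
          have "sqrt ((2::real)^m*2^q) \<le> 2^m*2^q" proof (rule sqrt_le_self')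
            have "(1::real) \<le> 2^m" "(1::real) \<le> 2^q" by simp_all
            then show "(1::real) \<le> 2^m*2^q" using mult_mono[of 1 "2^m" 1 "(2::real)^q"] by simp
          qed
          also have "\<dots> = 2^(n+1+q)" unfolding m_def by (simp add: power_add)
          finally show ?thesis .
        qed
        have lL: "real (length gs1) \<le> real L" using len[OF l1] by simp
        have "2 * real (length gs1) * sqrt (2^m*2^q) \<le> 2 * real L * 2^(n+1+q)"
          using lL S by (intro mult_mono) simp_all
        also have "\<dots> < real Dd" unfolding Dd_def by simp
        finally have "2 * real (length gs1) * sqrt (2^m*2^q) < real Dd" .
        then show ?thesis using Dpos by (simp add: field_simps)
      qed
      have oq: "opeq m (\<lambda>x y. circuit_op m gs1 x y - circuit_op m gs2 x y) (\<lambda>x y. U_f n f1 x y - U_f n f2 x y)"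
        using op1 op2 by (simp add: opeq_def)
      from ne obtain x where fx: "f1 x \<noteq> f2 x" by auto
      have x: "x \<in> bits n" using fx f1 f2 unfolding F_def by auto
      have xm1: "x @ [f1 x] \<in> bits m" and xm2: "x @ [False] \<in> bits m" using x by (simp_all add: bits_def m_def)
      have "cmod (U_f n f1 (x @ [f1 x]) (x @ [False]) - U_f n f2 (x @ [f1 x]) (x @ [False])) = 1"
        using fx by (simp add: Uf_entry[OF x])
      then have "1 \<le> frob m (\<lambda>x y. U_f n f1 x y - U_f n f2 x y)"
        using frob_entry[OF xm1 xm2, of "\<lambda>x y. U_f n f1 x y - U_f n f2 x y"] by simp
      also have "\<dots> = frob m (\<lambda>x y. circuit_op m gs1 x y - circuit_op m gs2 x y)"
        by (rule frob_opeq[OF opeq_sym[OF oq]])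
      finally show False using bnd small by linarith
    qed
  qed
  have "card F \<le> card W"
    by (rule card_inj_on_le[OF inj _ finW]) (use img in auto)
  then have c: "2^(2^n) \<le> (L+1) * (card Al + 1)^L" using cardW card_F[of n] unfolding F_def by linarith
  show False
    by (rule count_arith[where K=K and E=E, OF n _ _ LnE Dd_def cardAl[unfolded m_def] c]) (simp_all add: E_def K_def)
qed




theorem mainTheorem12:
  shows "\<forall>q::nat. q \<ge> 1 \<longrightarrow> (\<exists>C::real. C > 0 \<and>
           (\<forall>n::nat. n > 0 \<longrightarrow> (\<exists>f :: bool list \<Rightarrow> bool.
              ereal (C * 2 ^ n / real n) \<le> ereal_of_enat (stringent_qcc q n f))))"
proof (intro allI impI)
  fix q :: nat assume "q \<ge> 1"
  define E :: nat where "E = 2 + q + 2*4^q*(q+6)"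
  have Epos: "E > 0" unfolding E_def by simp
  show "\<exists>C::real. C > 0 \<and> (\<forall>n::nat. n > 0 \<longrightarrow> (\<exists>f :: bool list \<Rightarrow> bool.
              ereal (C * 2 ^ n / real n) \<le> ereal_of_enat (stringent_qcc q n f)))"
  proof (rule exI[of _ "1 / real E"], intro conjI allI impI)
    show "(0::real) < 1 / real E" using Epos by simp
    fix n :: nat assume n: "n > 0"
    obtain f where f: "\<not> (\<exists>gs. q_circuit q (n+1) gs \<and> opeq (n+1) (circuit_op (n+1) gs) (U_f n f) \<and> length gs * (n*E) < 2^n)"
      using main_count[OF n, of q] unfolding E_def by blast
    show "\<exists>f. ereal (1 / real E * 2 ^ n / real n) \<le> ereal_of_enat (stringent_qcc q n f)"
    proof (rule exI[of _ f])
      show "ereal (1 / real E * 2 ^ n / real n) \<le> ereal_of_enat (stringent_qcc q n f)"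
      proof (cases "stringent_qcc q n f")
        case infinity
        then show ?thesis by simp
      next
        case (enat r)
        then obtain gs where gs: "q_circuit q (n+1) gs" "opeq (n+1) (circuit_op (n+1) gs) (U_f n f)" "length gs = r"
          using qcc_witness[of q "n+1" "U_f n f" r] unfolding stringent_qcc_def by blast
        then have "\<not> r * (n*E) < 2^n" using f by blast
        then have "(2::nat)^n \<le> r * (n*E)" by simp
        then have le: "(2::real)^n \<le> real r * (real n * real E)"
          by (metis of_nat_le_iff of_nat_mult of_nat_numeral of_nat_power)
        have "1 / real E * 2 ^ n / real n = 2^n / (real n * real E)" by simp
        also have "\<dots> \<le> real r" using le n Epos by (simp add: divide_le_eq mult.commute)
        finally show ?thesis using enat by simp
      qed
    qed
  qed
qed


end
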